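(* Let $n\ge 4$ and let $\sigma$ be a maximal simplex of $\Delta_n$. Then $\dim(\sigma)\in\{7,\,n+3,\,2n-1\}$. Moreover, if $\dim(\sigma)\neq 7$, then either $\sigma=N(v)\cup N(w)$ for some adjacent vertices $v,w$ of $\mathbb{I}_n$, or $\sigma=N(u)\cup K_u^{i,j,k}$ for some vertex $u$ and distinct $i,j,k\in[n]$.
   Context: $\mathbb{I}_n$ is the $n$-dimensional hypercube graph on vertex set $\{0,1\}^n$ (adjacent iff differing in exactly one coordinate), with Hamming distance $d(v,w)=\#\{i: v(i)\ne w(i)\}$. $\Delta_n=\mathcal{VR}(\mathbb{I}_n;3)$ is the simplicial complex whose simplices are the subsets $\sigma\subseteq\{0,1\}^n$ with $d(x,y)\le 3$ for all $x,y\in\sigma$; $\dim\sigma=|\sigma|-1$. $[n]=\{1,\dots,n\}$. For a vertex $u$ and distinct $i_1,\dots,i_k$, $u^{i_1,\dots,i_k}$ is $u$ with exactly coordinates $i_1,\dots,i_k$ changed. $N(u)=\{u^i:i\in[n]\}$. For distinct $i,j,k$, $K_u^{i,j,k}=\{u,u^{i,j},u^{j,k},u^{i,k}\}$. *)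

theory Defs
  imports Main "HOL-Library.FuncSet"
begin

text \<open>Vertices of the hypercube I_n: functions [n] -> {0,1}, encoded as extensional
  functions from {1..n} to bool.\<close>
definition hcube :: "nat \<Rightarrow> (nat \<Rightarrow> bool) set" where
  "hcube n = {1..n} \<rightarrow>\<^sub>E (UNIV :: bool set)"

definition hdist :: "nat \<Rightarrow> (nat \<Rightarrow> bool) \<Rightarrow> (nat \<Rightarrow> bool) \<Rightarrow> nat" where
  "hdist n v w = card {i \<in> {1..n}. v i \<noteq> w i}"

definition hadj :: "nat \<Rightarrow> (nat \<Rightarrow> bool) \<Rightarrow> (nat \<Rightarrow> bool) \<Rightarrow> bool" where
  "hadj n v w \<longleftrightarrow> v \<in> hcube n \<and> w \<in> hcube n \<and> hdist n v w = 1"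

definition flip :: "(nat \<Rightarrow> bool) \<Rightarrow> nat set \<Rightarrow> (nat \<Rightarrow> bool)" where
  "flip u I = (\<lambda>i. if i \<in> I then \<not> u i else u i)"

definition nbhd :: "nat \<Rightarrow> (nat \<Rightarrow> bool) \<Rightarrow> (nat \<Rightarrow> bool) set" where
  "nbhd n u = {flip u {i} | i. i \<in> {1..n}}"

definition Kset :: "(nat \<Rightarrow> bool) \<Rightarrow> nat \<Rightarrow> nat \<Rightarrow> nat \<Rightarrow> (nat \<Rightarrow> bool) set" where
  "Kset u i j k = {u, flip u {i, j}, flip u {j, k}, flip u {i, k}}"

text \<open>Simplices of Delta_n = VR(I_n; 3): nonempty vertex sets of pairwise distance at most 3.\<close>
definition simplices :: "nat \<Rightarrow> (nat \<Rightarrow> bool) set set" where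
  "simplices n = {\<sigma>. \<sigma> \<noteq> {} \<and> \<sigma> \<subseteq> hcube n \<and> (\<forall>x\<in>\<sigma>. \<forall>y\<in>\<sigma>. hdist n x y \<le> 3)}"

definition maximal_simplex :: "nat \<Rightarrow> (nat \<Rightarrow> bool) set \<Rightarrow> bool" where
  "maximal_simplex n \<sigma> \<longleftrightarrow> \<sigma> \<in> simplices n \<and> (\<forall>\<tau>\<in>simplices n. \<sigma> \<subseteq> \<tau> \<longrightarrow> \<tau> = \<sigma>)"

definition sdim :: "(nat \<Rightarrow> bool) set \<Rightarrow> int" where
  "sdim \<sigma> = int (card \<sigma>) - 1"

end

theory Submission
  imports Defs
begin

definition sdf :: "nat set \<Rightarrow> nat set \<Rightarrow> nat set" where
  "sdf A B = (A - B) \<union> (B - A)"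
lemma sdf_mem[simp]: "x \<in> sdf A B \<longleftrightarrow> (x \<in> A) \<noteq> (x \<in> B)"
  unfolding sdf_def by auto
lemma sdf_assoc: "sdf (sdf A B) C = sdf A (sdf B C)" by auto
lemma sdf_comm: "sdf A B = sdf B A" by auto
lemma sdf_cancel[simp]: "sdf A (sdf A B) = B" by auto
lemma sdf_cancel2[simp]: "sdf (sdf A B) B = A" by auto
lemma sdf_self[simp]: "sdf A A = {}" by auto
lemma sdf_empty[simp]: "sdf A {} = A" "sdf {} A = A" by auto
lemma sdf_sub: "A \<subseteq> S \<Longrightarrow> B \<subseteq> S \<Longrightarrow> sdf A B \<subseteq> S" by auto
lemma finite_sdf: "finite A \<Longrightarrow> finite B \<Longrightarrow> finite (sdf A B)"
  by (simp add: sdf_def)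

lemma card_sdf_tri: "finite A \<Longrightarrow> finite B \<Longrightarrow> finite C \<Longrightarrow>
   card (sdf A B) \<le> card (sdf A C) + card (sdf C B)"
proof -
  assume f: "finite A" "finite B" "finite C"
  have "sdf A B \<subseteq> sdf A C \<union> sdf C B" by auto
  then have "card (sdf A B) \<le> card (sdf A C \<union> sdf C B)"
    by (rule card_mono[rotated]) (use f in \<open>simp add: sdf_def\<close>)
  also have "\<dots> \<le> card (sdf A C) + card (sdf C B)" by (rule card_Un_le)
  finally show ?thesis .
qed
lemma card_sdf_eq: "finite A \<Longrightarrow> finite B \<Longrightarrow> card (sdf A B) + 2 * card (A \<inter> B) = card A + card B"
proof -
  assume f: "finite A" "finite B"
  have 1: "card (sdf A B) = card (A - B) + card (B - A)"
    unfolding sdf_def by (rule card_Un_disjoint) (use f in auto)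
  have "A = (A - B) \<union> (A \<inter> B)" "(A - B) \<inter> (A \<inter> B) = {}" by auto
  then have "card A = card (A - B) + card (A \<inter> B)"
    using f card_Un_disjoint[of "A - B" "A \<inter> B"] by simp
  moreover have "B = (B - A) \<union> (A \<inter> B)" "(B - A) \<inter> (A \<inter> B) = {}" by auto
  then have "card B = card (B - A) + card (A \<inter> B)"
    using f card_Un_disjoint[of "B - A" "A \<inter> B"] by simp
  ultimately show ?thesis using 1 by simp
qed
lemma card_sdf_single: "finite A \<Longrightarrow> card (sdf A {i}) = (if i \<in> A then card A - 1 else card A + 1)"
proof -
  assume f: "finite A"
  show ?thesis
  proof (cases "i \<in> A")
    case True
    then have "sdf A {i} = A - {i}" by auto
    then show ?thesis using True f by simp
  next
    case False
    then have "sdf A {i} = insert i A" by auto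
    then show ?thesis using False f by simp
  qed
qed
lemma even_sdf: "finite A \<Longrightarrow> finite B \<Longrightarrow> even (card (sdf A B)) \<longleftrightarrow> (even (card A) \<longleftrightarrow> even (card B))"
  using card_sdf_eq[of A B] by presburger
lemma card_sdf_bound: "finite C \<Longrightarrow> finite D \<Longrightarrow> finite P \<Longrightarrow> finite Q \<Longrightarrow>
  card (sdf (sdf C P) (sdf D Q)) \<le> card (sdf C D) + card P + card Q"
proof -
  assume f: "finite C" "finite D" "finite P" "finite Q"
  have "sdf (sdf C P) (sdf D Q) \<subseteq> sdf C D \<union> P \<union> Q" by auto
  then have "card (sdf (sdf C P) (sdf D Q)) \<le> card (sdf C D \<union> P \<union> Q)"
    by (rule card_mono[rotated]) (use f in \<open>simp add: sdf_def\<close>)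
  also have "\<dots> \<le> card (sdf C D \<union> P) + card Q" by (rule card_Un_le)
  also have "\<dots> \<le> card (sdf C D) + card P + card Q" using card_Un_le[of "sdf C D" P] by simp
  finally show ?thesis .
qed
definition Nn :: "nat \<Rightarrow> nat set \<Rightarrow> nat set set" where
  "Nn n C = (\<lambda>i. sdf C {i}) ` {1..n}"
definition Kf :: "nat set \<Rightarrow> nat \<Rightarrow> nat \<Rightarrow> nat \<Rightarrow> nat set set" where
  "Kf U i j k = {U, sdf U {i,j}, sdf U {j,k}, sdf U {i,k}}"
definition maxfam :: "nat \<Rightarrow> nat set set \<Rightarrow> bool" where
  "maxfam n F \<longleftrightarrow> F \<subseteq> Pow {1..n} \<and> (\<forall>A\<in>F. \<forall>B\<in>F. card (sdf A B) \<le> 3) \<and>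
     (\<forall>A. A \<subseteq> {1..n} \<longrightarrow> (\<forall>B\<in>F. card (sdf A B) \<le> 3) \<longrightarrow> A \<in> F)"

lemma maxfamD:
  assumes "maxfam n F"
  shows "F \<subseteq> Pow {1..n}" "\<And>A B. A \<in> F \<Longrightarrow> B \<in> F \<Longrightarrow> card (sdf A B) \<le> 3"
    "\<And>A. A \<subseteq> {1..n} \<Longrightarrow> (\<And>B. B \<in> F \<Longrightarrow> card (sdf A B) \<le> 3) \<Longrightarrow> A \<in> F"
  using assms unfolding maxfam_def by blast+

lemma maxfam_fin: "maxfam n F \<Longrightarrow> A \<in> F \<Longrightarrow> finite A"
  using maxfamD(1) finite_subset by (metis PowD finite_atLeastAtMost subsetD)

lemma maxfam_finF: "maxfam n F \<Longrightarrow> finite F"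
  using maxfamD(1) by (metis finite_Pow_iff finite_atLeastAtMost finite_subset)

lemma dist3:
  assumes "maxfam n F" "F \<noteq> {}" "3 \<le> n"
  shows "\<exists>X\<in>F. \<exists>Y\<in>F. card (sdf X Y) = 3"
proof (rule ccontr)
  assume "\<not> ?thesis"
  then have le2: "card (sdf X Y) \<le> 2" if "X \<in> F" "Y \<in> F" for X Y
    using maxfamD(2)[OF assms(1) that] that by fastforce
  have step: "sdf Z {i} \<in> F" if "Z \<in> F" "i \<in> {1..n}" for Z i
  proof (rule maxfamD(3)[OF assms(1)])
    have "Z \<subseteq> {1..n}" using maxfamD(1)[OF assms(1)] that by blast
    then show "sdf Z {i} \<subseteq> {1..n}" using that by auto
    fix B assume B: "B \<in> F"
    have "card (sdf (sdf Z {i}) B) \<le> card (sdf (sdf Z {i}) Z) + card (sdf Z B)"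
      by (rule card_sdf_tri) (use maxfam_fin[OF assms(1)] that B in \<open>auto simp: sdf_def\<close>)
    moreover have "sdf (sdf Z {i}) Z = {i}" by auto
    ultimately show "card (sdf (sdf Z {i}) B) \<le> 3" using le2[OF that(1) B] by simp
  qed
  obtain X where X: "X \<in> F" using assms(2) by auto
  have "sdf (sdf (sdf X {1}) {2}) {3} \<in> F"
    using step X assms(3) by simp
  moreover have "sdf X (sdf (sdf (sdf X {1}) {2}) {3}) = {1,2,3}" by auto
  ultimately have "card {1::nat,2,3} \<le> 2" using le2[OF X] by metis
  then show False by simp
qed

lemma lower8:
  assumes mf: "maxfam n F" and e: "{} \<in> F" and T: "T \<in> F" "card T = 3"
  shows "8 \<le> card F"
proof -
  have finT: "finite T" using T card.infinite by fastforce
  have Tn: "T \<subseteq> {1..n}" using maxfamD(1)[OF mf] T by auto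
  have key: "\<exists>B\<in>F. \<not> B \<subseteq> T \<and> B \<inter> T = T - W" if W: "W \<subseteq> T" "W \<notin> F" for W
  proof -
    obtain B where B: "B \<in> F" "\<not> card (sdf W B) \<le> 3"
      using maxfamD(3)[OF mf, of W] W Tn by blast
    have finB: "finite B" using maxfam_fin[OF mf B(1)] .
    define S where "S = B \<inter> T"
    define R where "R = B - T"
    have finS: "finite S" "finite R" using finB by (auto simp: S_def R_def)
    have c1: "card B = card S + card R"
    proof -
      have "B = S \<union> R" "S \<inter> R = {}" by (auto simp: S_def R_def)
      then show ?thesis using finS card_Un_disjoint by metis
    qed
    have c2: "card (sdf B T) = (3 - card S) + card R"
    proof -
      have "sdf B T = (T - S) \<union> R" "(T - S) \<inter> R = {}" by (auto simp: S_def R_def)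
      moreover have "card (T - S) = 3 - card S"
        using card_Diff_subset[of S T] finS T(2) by (simp add: S_def)
      ultimately show ?thesis using finS finT card_Un_disjoint
        by (metis finite_Diff)
    qed
    have "card (sdf B {}) \<le> 3" using maxfamD(2)[OF mf B(1) e] .
    then have cB: "card B \<le> 3" by simp
    have cBT: "card (sdf B T) \<le> 3" using maxfamD(2)[OF mf B(1) T(1)] .
    have cST: "card S \<le> 3" using card_mono[OF finT, of S] by (simp add: S_def T(2))
    have cR: "card R \<le> 1" using c1 c2 cB cBT cST by linarith
    have c3: "card (sdf W B) \<le> card (sdf W S) + card R"
    proof -
      have "sdf W B = sdf W S \<union> R" using W(1) by (auto simp: S_def R_def)
      then show ?thesis by (simp add: card_Un_le)
    qed
    have sWS: "sdf W S \<subseteq> T" using W(1) by (auto simp: S_def)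
    have c4: "card (sdf W S) \<le> 3" using card_mono[OF finT sWS] T(2) by simp
    have "card R = 1" "card (sdf W S) = 3" using c3 c4 cR B(2) by linarith+
    then have "R \<noteq> {}" by auto
    moreover have "sdf W S = T" using card_subset_eq[OF finT sWS] \<open>card (sdf W S) = 3\<close> T(2) by simp
    then have "S = T - W" using W(1) by (auto simp: S_def)
    ultimately show ?thesis using B(1) by (auto simp: S_def R_def)
  qed
  define h where "h W = (if W \<in> F then W else (SOME B. B \<in> F \<and> \<not> B \<subseteq> T \<and> B \<inter> T = T - W))" for W
  have hF: "h W \<in> F \<and> (W \<in> F \<longrightarrow> h W = W) \<and> (W \<notin> F \<longrightarrow> \<not> h W \<subseteq> T \<and> h W \<inter> T = T - W)"
    if "W \<subseteq> T" for W
  proof (cases "W \<in> F")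
    case True then show ?thesis by (simp add: h_def)
  next
    case False
    have ex: "\<exists>B. B \<in> F \<and> \<not> B \<subseteq> T \<and> B \<inter> T = T - W" using key[OF that False] by blast
    then show ?thesis using False someI_ex[OF ex] by (simp add: h_def)
  qed
  have inj: "inj_on h (Pow T)"
  proof (rule inj_onI)
    fix W1 W2 assume W: "W1 \<in> Pow T" "W2 \<in> Pow T" "h W1 = h W2"
    show "W1 = W2"
    proof (cases "W1 \<in> F"; cases "W2 \<in> F")
      assume "W1 \<in> F" "W2 \<in> F" then show ?thesis using hF W by auto
    next
      assume "W1 \<in> F" "W2 \<notin> F" then show ?thesis using hF[of W1] hF[of W2] W by auto
    next
      assume "W1 \<notin> F" "W2 \<in> F" then show ?thesis using hF[of W1] hF[of W2] W by auto
    next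
      assume "W1 \<notin> F" "W2 \<notin> F"
      then have "T - W1 = T - W2" using hF[of W1] hF[of W2] W by auto
      then show ?thesis using W by auto
    qed
  qed
  have "card (h ` Pow T) = 8" using card_image[OF inj] finT T(2) by (simp add: card_Pow)
  moreover have "h ` Pow T \<subseteq> F" using hF by auto
  ultimately show ?thesis using card_mono[OF maxfam_finF[OF mf]] by metis
qed


lemma meets3: "x \<noteq> y \<Longrightarrow> i \<noteq> j \<Longrightarrow> j \<noteq> k \<Longrightarrow> i \<noteq> k \<Longrightarrow> {x,y} \<inter> {i,j} \<noteq> {} \<Longrightarrow>
  {x,y} \<inter> {j,k} \<noteq> {} \<Longrightarrow> {x,y} \<inter> {i,k} \<noteq> {} \<Longrightarrow> {x,y} = {i,j} \<or> {x,y} = {j,k} \<or> {x,y} = {i,k}"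
  apply (simp add: doubleton_eq_iff)
  by metis

lemma pairs_struct:
  assumes P2: "\<forall>P\<in>PP. card P = 2" and int1: "\<forall>P\<in>PP. \<forall>Q\<in>PP. P \<noteq> Q \<longrightarrow> card (P \<inter> Q) = 1"
    and ne: "PP \<noteq> {}" and sub: "\<forall>P\<in>PP. P \<subseteq> S"
  shows "(\<exists>i\<in>S. \<forall>P\<in>PP. i \<in> P) \<or>
    (\<exists>i\<in>S. \<exists>j\<in>S. \<exists>k\<in>S. i \<noteq> j \<and> j \<noteq> k \<and> i \<noteq> k \<and> PP \<subseteq> {{i,j},{j,k},{i,k}})"
proof -
  have meet: "P \<inter> Q \<noteq> {}" if "P \<in> PP" "Q \<in> PP" for P Q
  proof (cases "P = Q")
    case True then show ?thesis using P2 that by auto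
  next
    case False then show ?thesis using int1 that by fastforce
  qed
  obtain P1 where P1: "P1 \<in> PP" using ne by auto
  obtain i j where ij: "P1 = {i,j}" "i \<noteq> j" using P2 P1 card_2_iff by metis
  show ?thesis
  proof (cases "\<forall>P\<in>PP. i \<in> P")
    case True then show ?thesis using sub P1 ij by blast
  next
    case False
    then obtain P2' where P2': "P2' \<in> PP" "i \<notin> P2'" by blast
    show ?thesis
    proof (cases "\<forall>P\<in>PP. j \<in> P")
      case True then show ?thesis using sub P1 ij by blast
    next
      case False
      then obtain P3 where P3: "P3 \<in> PP" "j \<notin> P3" by blast
      have "j \<in> P2'" using meet[OF P1 P2'(1)] P2'(2) ij by auto
      have "card (P2' - {j}) = 1" using P2 P2'(1) \<open>j \<in> P2'\<close> by simp
      then obtain k where k: "P2' - {j} = {k}" using card_1_singletonE by blast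
      have P2eq: "P2' = {j,k}" using k \<open>j \<in> P2'\<close> by auto
      have kj: "k \<noteq> j" "k \<noteq> i" using k P2'(2) by auto
      have "i \<in> P3" using meet[OF P1 P3(1)] P3(2) ij by auto
      have "k \<in> P3" using meet[OF P2'(1) P3(1)] P3(2) P2eq by auto
      have P3eq: "P3 = {i,k}"
      proof -
        have "{i,k} \<subseteq> P3" using \<open>i \<in> P3\<close> \<open>k \<in> P3\<close> by auto
        moreover have "finite P3" using P2 P3(1) card.infinite by fastforce
        ultimately show ?thesis using P2 P3(1) kj card_subset_eq[of P3 "{i,k}"] by auto
      qed
      have "PP \<subseteq> {{i,j},{j,k},{i,k}}"
      proof
        fix Q assume Q: "Q \<in> PP"
        obtain x y where xy: "Q = {x,y}" "x \<noteq> y" using P2 Q card_2_iff by metis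
        have "{x,y} = {i,j} \<or> {x,y} = {j,k} \<or> {x,y} = {i,k}"
          apply (rule meets3)
          using xy ij kj meet[OF Q P1] meet[OF Q P2'(1)] meet[OF Q P3(1)] P2eq P3eq by auto
        then show "Q \<in> {{i,j},{j,k},{i,k}}" using xy by auto
      qed
      moreover have "i \<in> S" "j \<in> S" using sub P1 ij by auto
      moreover have "k \<in> S" using sub P2'(1) P2eq by auto
      ultimately show ?thesis using ij kj by blast
    qed
  qed
qed

lemma code_lemma:
  assumes X: "X \<subseteq> Pow {1..n}" "1 \<le> n" "\<forall>A\<in>X. \<forall>B\<in>X. A \<noteq> B \<longrightarrow> card (sdf A B) = 2"
  shows "(\<exists>C. C \<subseteq> {1..n} \<and> X \<subseteq> Nn n C) \<or>
    (\<exists>U i j k. U \<subseteq> {1..n} \<and> i \<in> {1..n} \<and> j \<in> {1..n} \<and> k \<in> {1..n} \<and>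
       i \<noteq> j \<and> j \<noteq> k \<and> i \<noteq> k \<and> X \<subseteq> Kf U i j k)"
proof (cases "X = {}")
  case True then show ?thesis by auto
next
  case False
  then obtain A0 where A0: "A0 \<in> X" by auto
  have A0n: "A0 \<subseteq> {1..n}" using A0 X(1) by auto
  show ?thesis
  proof (cases "X - {A0} = {}")
    case True
    then have "X = {A0}" using A0 by auto
    moreover have "A0 \<in> Nn n (sdf A0 {1})" unfolding Nn_def
      by (rule image_eqI[where x=1]) (use X(2) in auto)
    moreover have "sdf A0 {1} \<subseteq> {1..n}" using A0n X(2) by auto
    ultimately have "X \<subseteq> Nn n (sdf A0 {1})" by simp
    then show ?thesis using \<open>sdf A0 {1} \<subseteq> {1..n}\<close> by (intro disjI1 exI[of _ "sdf A0 {1}"]) simp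
  next
    case False
    define PP where "PP = (\<lambda>B. sdf A0 B) ` (X - {A0})"
    have fin: "finite A" if "A \<in> X" for A
      using that X(1) by (meson PowD finite_atLeastAtMost finite_subset subsetD)
    have P2: "\<forall>P\<in>PP. card P = 2"
    proof
      fix P assume "P \<in> PP"
      then obtain B where "B \<in> X" "B \<noteq> A0" "P = sdf A0 B" unfolding PP_def by auto
      then show "card P = 2" using X(3) A0 by blast
    qed
    have int1: "\<forall>P\<in>PP. \<forall>Q\<in>PP. P \<noteq> Q \<longrightarrow> card (P \<inter> Q) = 1"
    proof (intro ballI impI)
      fix P Q assume PQ: "P \<in> PP" "Q \<in> PP" "P \<noteq> Q"
      obtain B B' where BB: "B \<in> X" "B' \<in> X" "P = sdf A0 B" "Q = sdf A0 B'"
        using PQ unfolding PP_def by auto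
      have "B \<noteq> B'" using BB PQ(3) by auto
      then have "card (sdf B B') = 2" using X(3) BB(1,2) by blast
      moreover have "sdf P Q = sdf B B'" unfolding BB(3,4) by (rule set_eqI) auto
      moreover have "finite P" "finite Q" using BB fin A0 by (auto simp: sdf_def)
      ultimately show "card (P \<inter> Q) = 1"
        using card_sdf_eq[of P Q] P2 PQ by simp
    qed
    have sub: "\<forall>P\<in>PP. P \<subseteq> {1..n}"
    proof
      fix P assume "P \<in> PP"
      then obtain B where "B \<in> X" "P = sdf A0 B" unfolding PP_def by auto
      then show "P \<subseteq> {1..n}" using X(1) A0n sdf_sub by blast
    qed
    have ne: "PP \<noteq> {}" using False unfolding PP_def by auto
    from pairs_struct[OF P2 int1 ne sub] show ?thesis
    proof
      assume "\<exists>i\<in>{1..n}. \<forall>P\<in>PP. i \<in> P"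
      then obtain i where i: "i \<in> {1..n}" "\<forall>P\<in>PP. i \<in> P" by blast
      define C where "C = sdf A0 {i}"
      have "C \<subseteq> {1..n}" using A0n i(1) by (auto simp: C_def)
      moreover have "X \<subseteq> Nn n C"
      proof
        fix B assume B: "B \<in> X"
        show "B \<in> Nn n C"
        proof (cases "B = A0")
          case True
          then have "B = sdf C {i}" by (simp add: C_def)
          then show ?thesis using i(1) unfolding Nn_def by blast
        next
          case False
          define P where "P = sdf A0 B"
          have "P \<in> PP" using B False by (auto simp: PP_def P_def)
          then have iP: "i \<in> P" and cP: "card P = 2" and Pn: "P \<subseteq> {1..n}" using i P2 sub by auto
          have "card (P - {i}) = 1" using iP cP by simp
          then obtain m where m: "P - {i} = {m}" using card_1_singletonE by blast
          have Peq: "P = {i,m}" "m \<noteq> i" using m iP by auto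
          have "m \<in> {1..n}" using Pn Peq by auto
          moreover have "B = sdf C {m}"
          proof -
            have "B = sdf A0 P" by (simp add: P_def)
            also have "\<dots> = sdf C {m}" unfolding Peq(1) C_def using Peq(2) by (rule_tac set_eqI) auto
            finally show ?thesis .
          qed
          ultimately show ?thesis unfolding Nn_def by blast
        qed
      qed
      ultimately show ?thesis by (intro disjI1 exI[of _ C]) simp
    next
      assume "\<exists>i\<in>{1..n}. \<exists>j\<in>{1..n}. \<exists>k\<in>{1..n}. i \<noteq> j \<and> j \<noteq> k \<and> i \<noteq> k \<and> PP \<subseteq> {{i,j},{j,k},{i,k}}"
      then obtain i j k where ijk: "i \<in> {1..n}" "j \<in> {1..n}" "k \<in> {1..n}" "i \<noteq> j" "j \<noteq> k" "i \<noteq> k"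
        "PP \<subseteq> {{i,j},{j,k},{i,k}}" by blast
      have "X \<subseteq> Kf A0 i j k"
      proof
        fix B assume B: "B \<in> X"
        show "B \<in> Kf A0 i j k"
        proof (cases "B = A0")
          case True then show ?thesis by (simp add: Kf_def)
        next
          case False
          then have "sdf A0 B \<in> {{i,j},{j,k},{i,k}}" using ijk(7) B unfolding PP_def by auto
          moreover have "B = sdf A0 (sdf A0 B)" by simp
          ultimately show ?thesis unfolding Kf_def by (metis insertCI singletonD insertE)
        qed
      qed
      then show ?thesis
        by (intro disjI2 exI[of _ A0] exI[of _ i] exI[of _ j] exI[of _ k]) (use A0n ijk in simp)
    qed
  qed
qed

lemma star_small:
  assumes mf: "maxfam n F" and P: "P \<subseteq> F" "P \<subseteq> Nn n C" "C \<subseteq> {1..n}" "P \<noteq> {}"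
  shows "C \<in> F \<or> card P \<le> 4"
proof (cases "\<forall>B\<in>F. card (sdf C B) \<le> 3")
  case True then show ?thesis using maxfamD(3)[OF mf P(3)] by blast
next
  case False
  then obtain B where B: "B \<in> F" "\<not> card (sdf C B) \<le> 3" by blast
  have finC: "finite C" using P(3) finite_subset by blast
  have finB: "finite B" using maxfam_fin[OF mf B(1)] .
  obtain p0 where p0: "p0 \<in> P" using P(4) by auto
  then obtain i0 where i0: "p0 = sdf C {i0}" using P(2) unfolding Nn_def by auto
  have "card (sdf C B) \<le> card (sdf C p0) + card (sdf p0 B)"
    by (rule card_sdf_tri) (use finC finB i0 in \<open>auto simp: sdf_def\<close>)
  moreover have "sdf C p0 = {i0}" using i0 by auto
  moreover have "card (sdf p0 B) \<le> 3" using maxfamD(2)[OF mf _ B(1)] p0 P(1) by auto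
  ultimately have cD: "card (sdf C B) = 4" using B(2) by simp
  have finD: "finite (sdf C B)" using finC finB by (simp add: sdf_def)
  have "P \<subseteq> (\<lambda>i. sdf C {i}) ` (sdf C B)"
  proof
    fix p assume p: "p \<in> P"
    then obtain i where i: "p = sdf C {i}" using P(2) unfolding Nn_def by auto
    have "card (sdf p B) \<le> 3" using maxfamD(2)[OF mf _ B(1)] p P(1) by auto
    moreover have "sdf p B = sdf (sdf C B) {i}" using i by auto
    ultimately have "i \<in> sdf C B" using card_sdf_single[OF finD, of i] cD by (auto split: if_splits)
    then show "p \<in> (\<lambda>i. sdf C {i}) ` (sdf C B)" using i by blast
  qed
  then have "card P \<le> card ((\<lambda>i. sdf C {i}) ` (sdf C B))"
    using finD by (simp add: card_mono)
  also have "\<dots> \<le> 4" using card_image_le[OF finD, of "\<lambda>i. sdf C {i}"] cD by simp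
  finally show ?thesis by simp
qed


lemma Kf_recenter:
  assumes "C \<in> Kf U i j k" "i \<noteq> j" "j \<noteq> k" "i \<noteq> k"
  shows "Kf U i j k = Kf C i j k"
proof -
  consider "C = U" | "C = sdf U {i,j}" | "C = sdf U {j,k}" | "C = sdf U {i,k}"
    using assms(1) unfolding Kf_def by blast
  then show ?thesis
  proof cases
    case 1 then show ?thesis by simp
  next
    case 2
    have e: "sdf (sdf U {i,j}) {i,j} = U" "sdf (sdf U {i,j}) {j,k} = sdf U {i,k}" "sdf (sdf U {i,j}) {i,k} = sdf U {j,k}"
      using assms(2-4) by (rule_tac set_eqI; auto)+
    show ?thesis unfolding Kf_def 2 e by (simp add: insert_commute)
  next
    case 3
    have e: "sdf (sdf U {j,k}) {i,j} = sdf U {i,k}" "sdf (sdf U {j,k}) {j,k} = U" "sdf (sdf U {j,k}) {i,k} = sdf U {i,j}"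
      using assms(2-4) by (rule_tac set_eqI; auto)+
    show ?thesis unfolding Kf_def 3 e by (simp add: insert_commute)
  next
    case 4
    have e: "sdf (sdf U {i,k}) {i,j} = sdf U {j,k}" "sdf (sdf U {i,k}) {j,k} = sdf U {i,j}" "sdf (sdf U {i,k}) {i,k} = U"
      using assms(2-4) by (rule_tac set_eqI; auto)+
    show ?thesis unfolding Kf_def 4 e by (simp add: insert_commute)
  qed
qed

lemma closure_gen:
  assumes mf: "maxfam n F" and FG: "F \<subseteq> G" and Gn: "G \<subseteq> Pow {1..n}"
    and pw: "\<And>X Y. X \<in> G \<Longrightarrow> Y \<in> G \<Longrightarrow> card (sdf X Y) \<le> 3"
  shows "F = G"
proof
  show "G \<subseteq> F"
  proof
    fix X assume X: "X \<in> G"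
    show "X \<in> F"
      by (rule maxfamD(3)[OF mf]) (use X Gn FG pw in auto)
  qed
qed (use FG in auto)

lemma card_sdf_le_sum: "finite P \<Longrightarrow> finite Q \<Longrightarrow> card (sdf P Q) \<le> card P + card Q"
proof -
  assume f: "finite P" "finite Q"
  have "sdf P Q \<subseteq> P \<union> Q" by auto
  then have "card (sdf P Q) \<le> card (P \<union> Q)" using f by (simp add: card_mono)
  also have "\<dots> \<le> card P + card Q" by (rule card_Un_le)
  finally show ?thesis .
qed

lemma Nn_mem: "X \<in> Nn n C \<Longrightarrow> \<exists>i\<in>{1..n}. X = sdf C {i}"
  unfolding Nn_def by auto

lemma Nn_sub: "C \<subseteq> {1..n} \<Longrightarrow> Nn n C \<subseteq> Pow {1..n}"
  unfolding Nn_def by auto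

lemma Kf_sub: "U \<subseteq> {1..n} \<Longrightarrow> i \<in> {1..n} \<Longrightarrow> j \<in> {1..n} \<Longrightarrow> k \<in> {1..n} \<Longrightarrow> Kf U i j k \<subseteq> Pow {1..n}"
  unfolding Kf_def by auto

lemma pw_T1:
  assumes f: "finite C" "finite D" and cd: "card (sdf C D) = 1"
    and X: "X \<in> Nn n C \<union> Nn n D" and Y: "Y \<in> Nn n C \<union> Nn n D"
  shows "card (sdf X Y) \<le> 3"
proof -
  have "\<exists>C' a. (C' = C \<or> C' = D) \<and> X = sdf C' {a}" using X by (auto dest!: Nn_mem)
  then obtain C' a where C': "C' = C \<or> C' = D" "X = sdf C' {a}" by blast
  have "\<exists>D' b. (D' = C \<or> D' = D) \<and> Y = sdf D' {b}" using Y by (auto dest!: Nn_mem)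
  then obtain D' b where D': "D' = C \<or> D' = D" "Y = sdf D' {b}" by blast
  have cd': "card (sdf D C) = 1" using cd by (simp add: sdf_comm)
  have "card (sdf C' D') \<le> 1"
    using C'(1) D'(1) cd cd' by (elim disjE) simp_all
  moreover have "card (sdf X Y) \<le> card (sdf C' D') + card {a} + card {b}"
    unfolding C'(2) D'(2) by (rule card_sdf_bound) (use f C'(1) D'(1) in auto)
  ultimately show ?thesis by simp
qed

lemma card3: "card {a, b, c::nat} \<le> 3"
  by (simp add: card_insert_if)

lemma pw_T2:
  assumes f: "finite U"
    and X: "X \<in> Nn n U \<union> Kf U i j k" and Y: "Y \<in> Nn n U \<union> Kf U i j k"
  shows "card (sdf X Y) \<le> 3"
proof -
  define ok where "ok P \<longleftrightarrow> (\<exists>m. P = {m}) \<or> (P \<subseteq> {i,j,k} \<and> card P \<le> 2)" for P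
  have mem: "\<exists>P. ok P \<and> Z = sdf U P" if "Z \<in> Nn n U \<union> Kf U i j k" for Z
  proof -
    { assume "Z \<in> Nn n U"
      then obtain m where "Z = sdf U {m}" using Nn_mem by blast
      then have ?thesis unfolding ok_def by blast }
    moreover
    { assume "Z \<in> Kf U i j k"
      then consider "Z = sdf U {}" | "Z = sdf U {i,j}" | "Z = sdf U {j,k}" | "Z = sdf U {i,k}"
        unfolding Kf_def by auto
      then have ?thesis
      proof cases
        case 1 then show ?thesis unfolding ok_def by (intro exI[of _ "{}"]) simp
      next
        case 2 then show ?thesis unfolding ok_def by (intro exI[of _ "{i,j}"]) (simp add: card_insert_if)
      next
        case 3 then show ?thesis unfolding ok_def by (intro exI[of _ "{j,k}"]) (simp add: card_insert_if)
      next
        case 4 then show ?thesis unfolding ok_def by (intro exI[of _ "{i,k}"]) (simp add: card_insert_if)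
      qed }
    ultimately show ?thesis using that by blast
  qed
  obtain P where P: "ok P" "X = sdf U P" using mem[OF X] by blast
  obtain Q where Q: "ok Q" "Y = sdf U Q" using mem[OF Y] by blast
  have e: "sdf X Y = sdf P Q" unfolding P(2) Q(2) by (rule set_eqI) auto
  have fin: "finite P" "finite Q" using P(1) Q(1) unfolding ok_def by (auto intro: finite_subset)
  have cP: "card P \<le> 2" "card Q \<le> 2" using P(1) Q(1) unfolding ok_def by auto
  show ?thesis
  proof (cases "P \<subseteq> {i,j,k} \<and> Q \<subseteq> {i,j,k}")
    case True
    then have "sdf P Q \<subseteq> {i,j,k}" by auto
    then have "card (sdf P Q) \<le> card {i,j,k}" by (simp add: card_mono)
    then show ?thesis using card3[of i j k] e by simp
  next
    case False
    then have "card P = 1 \<or> card Q = 1" using P(1) Q(1) unfolding ok_def by auto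
    then show ?thesis using card_sdf_le_sum[OF fin] cP e by auto
  qed
qed

definition T1 :: "nat \<Rightarrow> nat set set \<Rightarrow> bool" where
  "T1 n F \<longleftrightarrow> (\<exists>C D. C \<subseteq> {1..n} \<and> D \<subseteq> {1..n} \<and> card (sdf C D) = 1 \<and> F = Nn n C \<union> Nn n D)"
definition T2 :: "nat \<Rightarrow> nat set set \<Rightarrow> bool" where
  "T2 n F \<longleftrightarrow> (\<exists>U i j k. U \<subseteq> {1..n} \<and> i \<in> {1..n} \<and> j \<in> {1..n} \<and> k \<in> {1..n} \<and>
      i \<noteq> j \<and> j \<noteq> k \<and> i \<noteq> k \<and> F = Nn n U \<union> Kf U i j k)"

lemma mkT1:
  assumes mf: "maxfam n F" and C: "C \<subseteq> {1..n}" and D: "D \<subseteq> {1..n}" and cd: "card (sdf C D) = 1"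
    and FG: "F \<subseteq> Nn n C \<union> Nn n D"
  shows "T1 n F"
proof -
  have fin: "finite C" "finite D" using C D finite_subset by blast+
  have "F = Nn n C \<union> Nn n D"
    by (rule closure_gen[OF mf FG]) (use Nn_sub[OF C] Nn_sub[OF D] pw_T1[OF fin cd] in auto)
  then show ?thesis unfolding T1_def using C D cd by blast
qed

lemma mkT2:
  assumes mf: "maxfam n F" and U: "U \<subseteq> {1..n}" and ijk: "i \<in> {1..n}" "j \<in> {1..n}" "k \<in> {1..n}"
    "i \<noteq> j" "j \<noteq> k" "i \<noteq> k" and FG: "F \<subseteq> Nn n U \<union> Kf U i j k"
  shows "T2 n F"
proof -
  have fin: "finite U" using U finite_subset by blast
  have "F = Nn n U \<union> Kf U i j k"
    by (rule closure_gen[OF mf FG]) (use Nn_sub[OF U] Kf_sub[OF U ijk(1-3)] pw_T2[OF fin] in auto)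
  then show ?thesis unfolding T2_def using U ijk by blast
qed


lemma card_Kf_le: "card (Kf U i j k) \<le> 4"
  unfolding Kf_def by (simp add: card_insert_if)

lemma sdf_single_empty: "sdf C {a} = {} \<Longrightarrow> C = {a}"
  by (metis sdf_cancel2 sdf_empty(2))

lemma main_set:
  assumes n4: "4 \<le> n" and mf: "maxfam n F" and e: "{} \<in> F"
  shows "T1 n F \<or> T2 n F \<or> card F \<le> 8"
proof -
  define E where "E = {A \<in> F. even (card A)}"
  define Od where "Od = {A \<in> F. odd (card A)}"
  have finF: "finite F" using maxfam_finF[OF mf] .
  have finA: "finite A" if "A \<in> F" for A using maxfam_fin[OF mf that] .
  have Fn: "F \<subseteq> Pow {1..n}" using maxfamD(1)[OF mf] .
  have FEO: "F = E \<union> Od" by (auto simp: E_def Od_def)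
  have cardF: "card F = card E + card Od"
  proof -
    have "E \<inter> Od = {}" by (auto simp: E_def Od_def)
    moreover have "finite E" "finite Od" using finF by (auto simp: E_def Od_def)
    ultimately show ?thesis using FEO card_Un_disjoint by metis
  qed
  have two: "card (sdf A B) = 2"
    if "A \<in> F" "B \<in> F" "A \<noteq> B" "even (card A) \<longleftrightarrow> even (card B)" for A B
  proof -
    have c3: "card (sdf A B) \<le> 3" using maxfamD(2)[OF mf that(1,2)] .
    have ev: "even (card (sdf A B))" using even_sdf[OF finA[OF that(1)] finA[OF that(2)]] that(4) by simp
    have "sdf A B \<noteq> {}" using that(3) by (auto intro!: set_eqI)
    then have "card (sdf A B) \<noteq> 0" using finite_sdf[OF finA[OF that(1)] finA[OF that(2)]] by simp
    then show ?thesis using c3 ev by presburger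
  qed
  have E2: "\<forall>A\<in>E. \<forall>B\<in>E. A \<noteq> B \<longrightarrow> card (sdf A B) = 2" using two by (auto simp: E_def)
  have O2: "\<forall>A\<in>Od. \<forall>B\<in>Od. A \<noteq> B \<longrightarrow> card (sdf A B) = 2" using two by (auto simp: Od_def)
  have En: "E \<subseteq> Pow {1..n}" "Od \<subseteq> Pow {1..n}" using Fn by (auto simp: E_def Od_def)
  have n1: "1 \<le> n" using n4 by simp
  have eE: "{} \<in> E" using e by (simp add: E_def)
  note CLE = code_lemma[OF En(1) n1 E2]
  note CLO = code_lemma[OF En(2) n1 O2]
  have E4: "T1 n F \<or> T2 n F \<or> card E \<le> 4"
    using CLE
  proof
    assume "\<exists>C. C \<subseteq> {1..n} \<and> E \<subseteq> Nn n C"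
    then obtain C where C: "C \<subseteq> {1..n}" "E \<subseteq> Nn n C" by blast
    have "C \<in> F \<or> card E \<le> 4"
      by (rule star_small[OF mf _ C(2) C(1)]) (use eE in \<open>auto simp: E_def\<close>)
    then show ?thesis
    proof
      assume CF: "C \<in> F"
      obtain a where "{} = sdf C {a}" using C(2) eE Nn_mem by blast
      then have "C = {a}" using sdf_single_empty by metis
      then have CO: "C \<in> Od" using CF by (simp add: Od_def)
      show ?thesis using CLO
      proof
        assume "\<exists>D. D \<subseteq> {1..n} \<and> Od \<subseteq> Nn n D"
        then obtain D where D: "D \<subseteq> {1..n}" "Od \<subseteq> Nn n D" by blast
        obtain b where "C = sdf D {b}" using D(2) CO Nn_mem by blast
        then have "sdf C D = {b}" by (auto intro!: set_eqI)
        then have "card (sdf C D) = 1" by simp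
        moreover have "F \<subseteq> Nn n C \<union> Nn n D" using FEO C(2) D(2) by auto
        ultimately show ?thesis using mkT1[OF mf C(1) D(1)] by blast
      next
        assume "\<exists>U i j k. U \<subseteq> {1..n} \<and> i \<in> {1..n} \<and> j \<in> {1..n} \<and> k \<in> {1..n} \<and>
          i \<noteq> j \<and> j \<noteq> k \<and> i \<noteq> k \<and> Od \<subseteq> Kf U i j k"
        then obtain U i j k where K: "i \<in> {1..n}" "j \<in> {1..n}" "k \<in> {1..n}"
          "i \<noteq> j" "j \<noteq> k" "i \<noteq> k" "Od \<subseteq> Kf U i j k" by blast
        have "Kf U i j k = Kf C i j k" using Kf_recenter[of C U i j k] K CO by blast
        then have "F \<subseteq> Nn n C \<union> Kf C i j k" using FEO C(2) K(7) by auto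
        then show ?thesis using mkT2[OF mf C(1) K(1-6)] by blast
      qed
    qed simp
  next
    assume "\<exists>U i j k. U \<subseteq> {1..n} \<and> i \<in> {1..n} \<and> j \<in> {1..n} \<and> k \<in> {1..n} \<and>
          i \<noteq> j \<and> j \<noteq> k \<and> i \<noteq> k \<and> E \<subseteq> Kf U i j k"
    then obtain U i j k where "E \<subseteq> Kf U i j k" by blast
    then have "card E \<le> card (Kf U i j k)" by (simp add: card_mono Kf_def)
    then show ?thesis using card_Kf_le[of U i j k] by simp
  qed
  have O4: "T1 n F \<or> T2 n F \<or> card Od \<le> 4"
    using CLO
  proof
    assume "\<exists>D. D \<subseteq> {1..n} \<and> Od \<subseteq> Nn n D"
    then obtain D where D: "D \<subseteq> {1..n}" "Od \<subseteq> Nn n D" by blast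
    show ?thesis
    proof (cases "Od = {}")
      case True then show ?thesis by simp
    next
      case False
      then obtain o0 where o0: "o0 \<in> Od" by blast
      have "D \<in> F \<or> card Od \<le> 4"
        by (rule star_small[OF mf _ D(2) D(1) False]) (auto simp: Od_def)
      then show ?thesis
      proof
        assume DF: "D \<in> F"
        obtain b where ob: "o0 = sdf D {b}" using D(2) o0 Nn_mem by blast
        have "odd (card o0)" using o0 by (simp add: Od_def)
        then have "even (card D)"
          using ob card_sdf_single[OF finA[OF DF], of b] by (auto split: if_splits)
        then have DE: "D \<in> E" using DF by (simp add: E_def)
        show ?thesis using CLE
        proof
          assume "\<exists>C. C \<subseteq> {1..n} \<and> E \<subseteq> Nn n C"
          then obtain C where C: "C \<subseteq> {1..n}" "E \<subseteq> Nn n C" by blast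
          obtain a where "D = sdf C {a}" using C(2) DE Nn_mem by blast
          then have "sdf C D = {a}" by (auto intro!: set_eqI)
          then have "card (sdf C D) = 1" by simp
          moreover have "F \<subseteq> Nn n C \<union> Nn n D" using FEO C(2) D(2) by auto
          ultimately show ?thesis using mkT1[OF mf C(1) D(1)] by blast
        next
          assume "\<exists>U i j k. U \<subseteq> {1..n} \<and> i \<in> {1..n} \<and> j \<in> {1..n} \<and> k \<in> {1..n} \<and>
            i \<noteq> j \<and> j \<noteq> k \<and> i \<noteq> k \<and> E \<subseteq> Kf U i j k"
          then obtain U i j k where K: "i \<in> {1..n}" "j \<in> {1..n}" "k \<in> {1..n}"
            "i \<noteq> j" "j \<noteq> k" "i \<noteq> k" "E \<subseteq> Kf U i j k" by blast
          have "Kf U i j k = Kf D i j k" using Kf_recenter[of D U i j k] K DE by blast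
          then have "F \<subseteq> Nn n D \<union> Kf D i j k" using FEO D(2) K(7) by auto
          then show ?thesis using mkT2[OF mf D(1) K(1-6)] by blast
        qed
      qed simp
    qed
  next
    assume "\<exists>U i j k. U \<subseteq> {1..n} \<and> i \<in> {1..n} \<and> j \<in> {1..n} \<and> k \<in> {1..n} \<and>
          i \<noteq> j \<and> j \<noteq> k \<and> i \<noteq> k \<and> Od \<subseteq> Kf U i j k"
    then obtain U i j k where "Od \<subseteq> Kf U i j k" by blast
    then have "card Od \<le> card (Kf U i j k)" by (simp add: card_mono Kf_def)
    then show ?thesis using card_Kf_le[of U i j k] by simp
  qed
  show ?thesis using E4 O4 cardF by linarith
qed

lemma card_Nn: "card (Nn n C) = n"
proof -
  have "inj_on (\<lambda>i. sdf C {i}) {1..n}"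
    by (rule inj_onI) (metis sdf_cancel singleton_inject)
  then show ?thesis unfolding Nn_def by (simp add: card_image)
qed

lemma card_T1:
  assumes "card (sdf C D) = 1"
  shows "card (Nn n C \<union> Nn n D) = 2 * n"
proof -
  have "Nn n C \<inter> Nn n D = {}"
  proof (rule ccontr)
    assume "Nn n C \<inter> Nn n D \<noteq> {}"
    then obtain X where "X \<in> Nn n C" "X \<in> Nn n D" by blast
    then obtain a b where ab: "X = sdf C {a}" "X = sdf D {b}" using Nn_mem by metis
    have "sdf C D = sdf {a} {b}"
      using ab by (metis sdf_assoc sdf_cancel sdf_cancel2 sdf_comm)
    moreover have "card (sdf {a} {b}) \<noteq> 1"
    proof (cases "a = b")
      case True then show ?thesis by simp
    next
      case False
      then have "sdf {a} {b} = {a,b}" by auto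
      then show ?thesis using False by simp
    qed
    ultimately show False using assms by simp
  qed
  moreover have "finite (Nn n C)" "finite (Nn n D)" unfolding Nn_def by auto
  ultimately show ?thesis using card_Un_disjoint card_Nn by (metis mult_2)
qed

lemma card_T2:
  assumes "i \<noteq> j" "j \<noteq> k" "i \<noteq> k"
  shows "card (Nn n U \<union> Kf U i j k) = n + 4"
proof -
  have K: "Kf U i j k = (\<lambda>P. sdf U P) ` {{}, {i,j}, {j,k}, {i,k}}" unfolding Kf_def by simp
  have inj: "inj_on (\<lambda>P. sdf U P) X" for X by (rule inj_onI) (metis sdf_cancel)
  have c4: "card {{}, {i,j}, {j,k}, {i,k}} = (4::nat)"
    using assms by (simp add: doubleton_eq_iff)
  have "card (Kf U i j k) = card {{}, {i,j}, {j,k}, {i,k}}" unfolding K by (rule card_image[OF inj])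
  then have cK: "card (Kf U i j k) = 4" using c4 by simp
  have "Nn n U \<inter> Kf U i j k = {}"
  proof (rule ccontr)
    assume "Nn n U \<inter> Kf U i j k \<noteq> {}"
    then obtain X where X: "X \<in> Nn n U" "X \<in> Kf U i j k" by blast
    obtain m where m: "X = sdf U {m}" using X(1) Nn_mem by blast
    obtain P where P: "P \<in> {{}, {i,j}, {j,k}, {i,k}}" "X = sdf U P" using X(2) K by blast
    have "{m} = P" using m P(2) by (metis sdf_cancel)
    then show False using P(1) assms by (auto simp: doubleton_eq_iff)
  qed
  moreover have "finite (Nn n U)" "finite (Kf U i j k)" unfolding Nn_def Kf_def by auto
  ultimately show ?thesis using card_Un_disjoint card_Nn cK by metis
qed


definition phi :: "nat \<Rightarrow> (nat \<Rightarrow> bool) \<Rightarrow> (nat \<Rightarrow> bool) \<Rightarrow> nat set" where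
  "phi n a x = {i \<in> {1..n}. x i \<noteq> a i}"

lemma flip_flip: "flip (flip u A) B = flip u (sdf A B)"
  by (rule ext) (auto simp: flip_def)

lemma hcube_arb: "x \<in> hcube n \<Longrightarrow> i \<notin> {1..n} \<Longrightarrow> x i = undefined"
  unfolding hcube_def by (rule PiE_arb)

lemma flip_phi: "a \<in> hcube n \<Longrightarrow> x \<in> hcube n \<Longrightarrow> flip a (phi n a x) = x"
  by (rule ext) (auto simp: flip_def phi_def hcube_arb)

lemma phi_flip: "A \<subseteq> {1..n} \<Longrightarrow> phi n a (flip a A) = A"
  by (auto simp: phi_def flip_def)

lemma phi_sub: "phi n a x \<subseteq> {1..n}"
  by (auto simp: phi_def)

lemma flip_hcube: "a \<in> hcube n \<Longrightarrow> A \<subseteq> {1..n} \<Longrightarrow> flip a A \<in> hcube n"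
  unfolding hcube_def by (auto simp: PiE_iff extensional_def flip_def dest: PiE_arb)

lemma hdist_phi: "hdist n x y = card (sdf (phi n a x) (phi n a y))"
proof -
  have "{i \<in> {1..n}. x i \<noteq> y i} = sdf (phi n a x) (phi n a y)"
    by (auto simp: phi_def)
  then show ?thesis by (simp add: hdist_def)
qed

lemma hdist_sym: "hdist n x y = hdist n y x"
proof -
  have "{i \<in> {1..n}. x i \<noteq> y i} = {i \<in> {1..n}. y i \<noteq> x i}" by auto
  then show ?thesis unfolding hdist_def by simp
qed

lemma hdist_self: "hdist n x x = 0"
  unfolding hdist_def by simp

lemma card_phi: "card (phi n x y) = hdist n y x"
  unfolding phi_def hdist_def by simp

lemma nbhd_flip: "nbhd n (flip a C) = flip a ` Nn n C"
  unfolding nbhd_def Nn_def by (auto simp: flip_flip)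

lemma Kset_flip: "Kset (flip a U) i j k = flip a ` Kf U i j k"
  unfolding Kset_def Kf_def by (simp add: flip_flip)

lemma maxfam_phi:
  assumes a: "a \<in> hcube n" and ms: "maximal_simplex n \<sigma>"
  shows "maxfam n (phi n a ` \<sigma>)"
proof -
  have s: "\<sigma> \<noteq> {}" "\<sigma> \<subseteq> hcube n" "\<And>x y. x \<in> \<sigma> \<Longrightarrow> y \<in> \<sigma> \<Longrightarrow> hdist n x y \<le> 3"
    using ms unfolding maximal_simplex_def simplices_def by auto
  have mx: "\<And>\<tau>. \<tau> \<in> simplices n \<Longrightarrow> \<sigma> \<subseteq> \<tau> \<Longrightarrow> \<tau> = \<sigma>"
    using ms unfolding maximal_simplex_def by auto
  show ?thesis unfolding maxfam_def
  proof (intro conjI allI impI ballI)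
    show "phi n a ` \<sigma> \<subseteq> Pow {1..n}" using phi_sub by auto
  next
    fix A B assume "A \<in> phi n a ` \<sigma>" "B \<in> phi n a ` \<sigma>"
    then obtain x y where "x \<in> \<sigma>" "y \<in> \<sigma>" "A = phi n a x" "B = phi n a y" by blast
    then show "card (sdf A B) \<le> 3" using s(3) hdist_phi[of n x y a] by metis
  next
    fix A assume A: "A \<subseteq> {1..n}" and all: "\<forall>B\<in>phi n a ` \<sigma>. card (sdf A B) \<le> 3"
    define z where "z = flip a A"
    have zh: "z \<in> hcube n" using flip_hcube[OF a A] by (simp add: z_def)
    have pz: "phi n a z = A" using phi_flip[OF A] by (simp add: z_def)
    have zy: "hdist n z y \<le> 3" if "y \<in> \<sigma>" for y
      using all that hdist_phi[of n z y a] pz by auto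
    have pw: "hdist n u v \<le> 3" if uv: "u \<in> insert z \<sigma>" "v \<in> insert z \<sigma>" for u v
    proof -
      consider "u = z" "v = z" | "u = z" "v \<in> \<sigma>" | "u \<in> \<sigma>" "v = z" | "u \<in> \<sigma>" "v \<in> \<sigma>"
        using uv by blast
      then show ?thesis
      proof cases
        case 1 then show ?thesis by (simp add: hdist_self)
      next
        case 2 then show ?thesis using zy by simp
      next
        case 3 then show ?thesis using zy[of u] hdist_sym[of n u z] by simp
      next
        case 4 then show ?thesis using s(3) by simp
      qed
    qed
    have "insert z \<sigma> \<in> simplices n"
      unfolding simplices_def using s(2) zh pw by blast
    then have "insert z \<sigma> = \<sigma>" using mx by blast
    then have "z \<in> \<sigma>" by blast
    then show "A \<in> phi n a ` \<sigma>" using pz by blast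
  qed
qed


theorem mainTheorem12:
  fixes n :: nat and \<sigma> :: "(nat \<Rightarrow> bool) set"
  assumes "n \<ge> 4" and "maximal_simplex n \<sigma>"
  shows "sdim \<sigma> \<in> {7, int n + 3, 2 * int n - 1} \<and>
    (sdim \<sigma> \<noteq> 7 \<longrightarrow>
      (\<exists>v w. hadj n v w \<and> \<sigma> = nbhd n v \<union> nbhd n w) \<or>
      (\<exists>u i j k. u \<in> hcube n \<and> i \<in> {1..n} \<and> j \<in> {1..n} \<and> k \<in> {1..n} \<and>
         i \<noteq> j \<and> j \<noteq> k \<and> i \<noteq> k \<and> \<sigma> = nbhd n u \<union> Kset u i j k))"
proof -
  note n4 = assms(1) and ms = assms(2)
  have s: "\<sigma> \<noteq> {}" "\<sigma> \<subseteq> hcube n"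
    using ms unfolding maximal_simplex_def simplices_def by auto
  obtain a0 where a0: "a0 \<in> \<sigma>" using s(1) by blast
  have mf0: "maxfam n (phi n a0 ` \<sigma>)" using maxfam_phi[OF _ ms] a0 s(2) by blast
  obtain X Y where XY: "X \<in> phi n a0 ` \<sigma>" "Y \<in> phi n a0 ` \<sigma>" "card (sdf X Y) = 3"
    using dist3[OF mf0] s(1) n4 by fastforce
  obtain x y where xy: "x \<in> \<sigma>" "y \<in> \<sigma>" "X = phi n a0 x" "Y = phi n a0 y" using XY(1,2) by blast
  have hxy: "hdist n x y = 3" using hdist_phi[of n x y a0] xy XY(3) by simp
  have xh: "x \<in> hcube n" using xy(1) s(2) by blast
  define F where "F = phi n x ` \<sigma>"
  have mf: "maxfam n F" unfolding F_def using maxfam_phi[OF xh ms] .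
  have e: "{} \<in> F" unfolding F_def using xy(1) by (auto simp: phi_def intro!: image_eqI[where x=x])
  have T: "phi n x y \<in> F" "card (phi n x y) = 3"
    using xy(2) hxy card_phi[of n x y] hdist_sym[of n x y] by (auto simp: F_def)
  have lb: "8 \<le> card F" using lower8[OF mf e T] .
  have inj: "inj_on (phi n x) \<sigma>"
  proof (rule inj_onI)
    fix u v assume uv: "u \<in> \<sigma>" "v \<in> \<sigma>" "phi n x u = phi n x v"
    have "u = flip x (phi n x u)" using flip_phi[OF xh] uv(1) s(2) by auto
    also have "\<dots> = flip x (phi n x v)" using uv(3) by simp
    also have "\<dots> = v" using flip_phi[OF xh] uv(2) s(2) by auto
    finally show "u = v" .
  qed
  have cs: "card \<sigma> = card F" unfolding F_def using card_image[OF inj] by simp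
  have sF: "\<sigma> = flip x ` F"
  proof -
    have "flip x ` F = (\<lambda>u. flip x (phi n x u)) ` \<sigma>" unfolding F_def by (simp add: image_image)
    also have "\<dots> = (\<lambda>u. u) ` \<sigma>" using flip_phi[OF xh] s(2) by (intro image_cong) auto
    finally show ?thesis by simp
  qed
  have sd: "sdim \<sigma> = int (card F) - 1" unfolding sdim_def cs ..
  from main_set[OF n4 mf e] show ?thesis
  proof (elim disjE)
    assume "T1 n F"
    then obtain C D where CD: "C \<subseteq> {1..n}" "D \<subseteq> {1..n}" "card (sdf C D) = 1" "F = Nn n C \<union> Nn n D"
      unfolding T1_def by blast
    have "card F = 2 * n" using card_T1[OF CD(3)] CD(4) by simp
    then have sdv: "sdim \<sigma> = 2 * int n - 1" using sd by simp
    have "\<sigma> = nbhd n (flip x C) \<union> nbhd n (flip x D)"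
      using sF CD(4) by (simp add: nbhd_flip image_Un)
    moreover have "hadj n (flip x C) (flip x D)"
    proof -
      have h: "flip x C \<in> hcube n" "flip x D \<in> hcube n" using flip_hcube[OF xh] CD(1,2) by auto
      have "hdist n (flip x C) (flip x D) = card (sdf C D)"
        using hdist_phi[of n "flip x C" "flip x D" x] phi_flip[OF CD(1)] phi_flip[OF CD(2)] by simp
      then show ?thesis unfolding hadj_def using h CD(3) by simp
    qed
    ultimately show ?thesis using sdv by blast
  next
    assume "T2 n F"
    then obtain U i j k where K: "U \<subseteq> {1..n}" "i \<in> {1..n}" "j \<in> {1..n}" "k \<in> {1..n}"
      "i \<noteq> j" "j \<noteq> k" "i \<noteq> k" "F = Nn n U \<union> Kf U i j k"
      unfolding T2_def by blast
    have "card F = n + 4" using card_T2[OF K(5-7)] K(8) by simp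
    then have sdv: "sdim \<sigma> = int n + 3" using sd by simp
    have "\<sigma> = nbhd n (flip x U) \<union> Kset (flip x U) i j k"
      using sF K(8) by (simp add: nbhd_flip Kset_flip image_Un)
    moreover have "flip x U \<in> hcube n" using flip_hcube[OF xh K(1)] .
    ultimately show ?thesis using sdv K(2-7) by blast
  next
    assume "card F \<le> 8"
    then have "sdim \<sigma> = 7" using lb sd by simp
    then show ?thesis by simp
  qed
qed

end
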